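(* Suppose there exist $\psi$ as in the context and positive finite numbers $I_{ij}$, $i\ne j\in\mathcal N_0$, such that for all $\varepsilon>0$ and all $i\ne j$, $$\lim_{L\to\infty}\mathsf P_i\Big\{\frac{1}{\psi(L)}\max_{1\le n\le L}\lambda_{ij}(n)\ge(1+\varepsilon)I_{ij}\Big\}=0 .$$ Then for all $i\in\mathcal N_0$ and every $0<\varepsilon<1$, $$\lim_{\alpha_{\max}\to0}\inf_{D\in\mathbb C_{\rm sim}(\boldsymbol\alpha)}\mathsf P_i\Big\{T>\Psi\Big((1-\varepsilon)\max_{j\in\mathcal N_0\setminus i}\frac{|\log\alpha_{ji}|}{I_{ij}}\Big)\Big\}=1,$$ and for all $r\ge1$ and $i\in\mathcal N_0$, as $\alpha_{\max}\to0$, $$\inf_{D\in\mathbb C_{\rm sim}(\boldsymbol\alpha)}\mathsf E_i[T^r]\ge\Big[\Psi\Big(\max_{j\in\mathcal N_0\setminus i}\frac{|\log\alpha_{ji}|}{I_{ij}}\Big)\Big]^r(1+o(1)).$$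
   Context: Observations $X_1,X_2,\dots$, $\mathcal F_n=\sigma(X_1,\dots,X_n)$, $\mathbf X_1^n=(X_1,\dots,X_n)$. There are $N+1$ simple hypotheses $H_i:\mathsf P=\mathsf P_i$, $i\in\mathcal N_0=\{0,1,\dots,N\}$ ($N\ge1$), where $\mathsf P_i$ restricted to $\mathcal F_n$ has density $p_{i,n}(\mathbf X_1^n)=\prod_{t=1}^n f_{i,t}(X_t\mid\mathbf X_1^{t-1})$, these restrictions being mutually absolutely continuous; $\mathsf E_i$ is expectation under $\mathsf P_i$; $\lambda_{ij}(n)=\log[p_{i,n}(\mathbf X_1^n)/p_{j,n}(\mathbf X_1^n)]$. A test $D=(T,d)$ consists of a stopping time $T$ w.r.t. $(\mathcal F_n)$ and an $\mathcal F_T$-measurable decision $d\in\mathcal N_0$. For $\boldsymbol\alpha=(\alpha_{ij})_{i\ne j}$, $\alpha_{ij}\in(0,1)$: $\mathbb C_{\rm sim}(\boldsymbol\alpha)=\{D:\mathsf P_i(d=j)\le\alpha_{ij}\ \forall i\ne j\}$, $\alpha_{\max}=\max_{i\ne j}\alpha_{ij}$; limits as $\alpha_{\max}\to0$ are along families with $|\log\alpha_{ij}|/|\log\alpha_{\max}|\to c_{ij}\in(0,1]$. The function $\psi:\mathbb R_+\to\mathbb R_+$ is increasing and one-to-one with $\psi(t)\to\infty$; $\Psi=\psi^{-1}$, $\Psi(t)\to\infty$, and $\lim_{\delta\to1}\lim_{t\to\infty}\Psi(\delta t)/\Psi(t)=1$. *)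

theory Defs
  imports "HOL-Probability.Probability"
begin

definition obs_filt :: "'w measure \<Rightarrow> (nat \<Rightarrow> 'w \<Rightarrow> 'b) \<Rightarrow> 'b measure \<Rightarrow> nat \<Rightarrow> 'w measure" where
  "obs_filt M X Nb n =
     sigma (space M) {X t -` A \<inter> space M | t A. t \<in> {1..n} \<and> A \<in> sets Nb}"

text \<open>lam i j n is the log-likelihood ratio log (p_{i,n}/p_{j,n}) of the restrictions of
  P i and P j to F n: it is F n-measurable and exp (lam i j n) is the Radon-Nikodym
  density of (P i)|F n with respect to (P j)|F n.\<close>
definition is_llr ::
  "'w measure \<Rightarrow> (nat \<Rightarrow> 'w \<Rightarrow> 'b) \<Rightarrow> 'b measure \<Rightarrow> nat \<Rightarrow> (nat \<Rightarrow> 'w measure)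
     \<Rightarrow> (nat \<Rightarrow> nat \<Rightarrow> nat \<Rightarrow> 'w \<Rightarrow> real) \<Rightarrow> bool" where
  "is_llr M X Nb N P lam \<longleftrightarrow>
     (\<forall>i\<le>N. \<forall>j\<le>N. \<forall>n.
        lam i j n \<in> borel_measurable (obs_filt M X Nb n) \<and>
        (\<forall>A\<in>sets (obs_filt M X Nb n).
           emeasure (P i) A = (\<integral>\<^sup>+ \<omega>\<in>A. ennreal (exp (lam i j n \<omega>)) \<partial>(P j))))"

text \<open>A test D = (T, d): T a stopping time w.r.t. (F n), d an F_T-measurable decision in {0..N}.\<close>
definition is_test ::
  "'w measure \<Rightarrow> (nat \<Rightarrow> 'w \<Rightarrow> 'b) \<Rightarrow> 'b measure \<Rightarrow> nat \<Rightarrow> ('w \<Rightarrow> nat) \<Rightarrow> ('w \<Rightarrow> nat) \<Rightarrow> bool" where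
  "is_test M X Nb N T d \<longleftrightarrow>
     (\<forall>n. {\<omega>\<in>space M. T \<omega> \<le> n} \<in> sets (obs_filt M X Nb n)) \<and>
     (\<forall>\<omega>\<in>space M. d \<omega> \<le> N) \<and>
     (\<forall>j n. {\<omega>\<in>space M. d \<omega> = j \<and> T \<omega> \<le> n} \<in> sets (obs_filt M X Nb n))"

definition C_sim ::
  "'w measure \<Rightarrow> (nat \<Rightarrow> 'w \<Rightarrow> 'b) \<Rightarrow> 'b measure \<Rightarrow> nat \<Rightarrow> (nat \<Rightarrow> 'w measure)
     \<Rightarrow> (nat \<Rightarrow> nat \<Rightarrow> real) \<Rightarrow> (('w \<Rightarrow> nat) \<times> ('w \<Rightarrow> nat)) set" where
  "C_sim M X Nb N P \<alpha> =
     {(T, d). is_test M X Nb N T d \<and>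
        (\<forall>i\<le>N. \<forall>j\<le>N. i \<noteq> j \<longrightarrow> measure (P i) {\<omega>\<in>space M. d \<omega> = j} \<le> \<alpha> i j)}"

definition alpha_max :: "nat \<Rightarrow> (nat \<Rightarrow> nat \<Rightarrow> real) \<Rightarrow> real" where
  "alpha_max N \<alpha> = Max {\<alpha> i j | i j. i \<le> N \<and> j \<le> N \<and> i \<noteq> j}"

end

theory Submission
  imports Defs "HOL-Probability.Conditional_Expectation"
begin


locale sht =
  fixes M :: "'w measure" and X :: "nat \<Rightarrow> 'w \<Rightarrow> 'b" and Nb :: "'b measure"
    and N :: nat and P :: "nat \<Rightarrow> 'w measure"
    and lam :: "nat \<Rightarrow> nat \<Rightarrow> nat \<Rightarrow> 'w \<Rightarrow> real"
  assumes X_meas: "\<And>t. X t \<in> measurable M Nb"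
    and P_prob: "\<And>i. i \<le> N \<Longrightarrow> prob_space (P i)"
    and P_sets: "\<And>i. i \<le> N \<Longrightarrow> sets (P i) = sets M"
    and llr: "is_llr M X Nb N P lam"
begin

definition G :: "nat \<Rightarrow> 'w set set" where
  "G n = {X t -` A \<inter> space M | t A. t \<in> {1..n} \<and> A \<in> sets Nb}"

lemma G_pow: "G n \<subseteq> Pow (space M)"
  unfolding G_def by auto

lemma G_sets: "G n \<subseteq> sets M"
  unfolding G_def using X_meas by (auto intro: measurable_sets)

lemma F_sets: "sets (obs_filt M X Nb n) = sigma_sets (space M) (G n)"
  unfolding obs_filt_def G_def[symmetric] by (rule sets_measure_of[OF G_pow])

lemma F_space: "space (obs_filt M X Nb n) = space M"
  unfolding obs_filt_def G_def[symmetric] by (rule space_measure_of[OF G_pow])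

lemma F_sub: "sets (obs_filt M X Nb n) \<subseteq> sets M"
  unfolding F_sets by (rule sets.sigma_sets_subset[OF G_sets])

lemma F_mono: "m \<le> n \<Longrightarrow> sets (obs_filt M X Nb m) \<subseteq> sets (obs_filt M X Nb n)"
  unfolding F_sets
  by (rule sigma_sets_mono') (force simp: G_def)

lemma sigma_sets_empty_sub: "A \<in> sigma_sets \<Omega> {} \<Longrightarrow> A = {} \<or> A = \<Omega>"
proof (induction rule: sigma_sets.induct)
  case (Union a)
  then show ?case
    by (cases "\<exists>i. a i = \<Omega>") auto
qed auto

lemma F0: "A \<in> sets (obs_filt M X Nb 0) \<Longrightarrow> A = {} \<or> A = space M"
  unfolding F_sets by (rule sigma_sets_empty_sub) (simp add: G_def)

lemma lam_meas: "i \<le> N \<Longrightarrow> j \<le> N \<Longrightarrow> lam i j n \<in> borel_measurable (obs_filt M X Nb n)"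
  using llr unfolding is_llr_def by blast

lemma lam_dens: "i \<le> N \<Longrightarrow> j \<le> N \<Longrightarrow> A \<in> sets (obs_filt M X Nb n) \<Longrightarrow>
   emeasure (P i) A = (\<integral>\<^sup>+ \<omega>\<in>A. ennreal (exp (lam i j n \<omega>)) \<partial>(P j))"
  using llr unfolding is_llr_def by blast

lemma lam_measM: "i \<le> N \<Longrightarrow> j \<le> N \<Longrightarrow> lam i j n \<in> borel_measurable M"
  using lam_meas[of i j n] F_sub[of n] F_space[of n]
  by (intro measurable_from_subalg[of M "obs_filt M X Nb n"]) (auto simp: subalgebra_def)

lemma space_P: "i \<le> N \<Longrightarrow> space (P i) = space M"
  using P_sets sets_eq_imp_space_eq by blast

lemma FM: "A \<in> sets (obs_filt M X Nb n) \<Longrightarrow> A \<in> sets M"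
  using F_sub by blast

lemma F_le: "{\<omega>\<in>space M. f \<omega> \<le> (c::real)} \<in> sets (obs_filt M X Nb n)"
  if "f \<in> borel_measurable (obs_filt M X Nb n)"
proof -
  have "f -` {..c} \<inter> space (obs_filt M X Nb n) \<in> sets (obs_filt M X Nb n)"
    using measurable_sets[OF that] by auto
  moreover have "f -` {..c} \<inter> space (obs_filt M X Nb n) = {\<omega>\<in>space M. f \<omega> \<le> c}"
    using F_space by auto
  ultimately show ?thesis by simp
qed

lemma F_lt: "{\<omega>\<in>space M. f \<omega> < (c::real)} \<in> sets (obs_filt M X Nb n)"
  if "f \<in> borel_measurable (obs_filt M X Nb n)"
proof -
  have "f -` {..<c} \<inter> space (obs_filt M X Nb n) \<in> sets (obs_filt M X Nb n)"
    using measurable_sets[OF that] by auto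
  moreover have "f -` {..<c} \<inter> space (obs_filt M X Nb n) = {\<omega>\<in>space M. f \<omega> < c}"
    using F_space by auto
  ultimately show ?thesis by simp
qed

lemma F_ge: "{\<omega>\<in>space M. f \<omega> \<ge> (c::real)} \<in> sets (obs_filt M X Nb n)"
  if "f \<in> borel_measurable (obs_filt M X Nb n)"
proof -
  have "f -` {c..} \<inter> space (obs_filt M X Nb n) \<in> sets (obs_filt M X Nb n)"
    using measurable_sets[OF that] by auto
  moreover have "f -` {c..} \<inter> space (obs_filt M X Nb n) = {\<omega>\<in>space M. f \<omega> \<ge> c}"
    using F_space by auto
  ultimately show ?thesis by simp
qed


lemma Z_empty:
  assumes i: "i \<le> N" and j: "j \<le> N" and a: "a > 0"
  shows "{\<omega>\<in>space M. lam i j 0 \<omega> \<ge> a} = {}"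
proof (rule ccontr)
  let ?S = "{\<omega>\<in>space M. lam i j 0 \<omega> \<ge> a}"
  assume ne: "?S \<noteq> {}"
  have S0: "?S \<in> sets (obs_filt M X Nb 0)" by (rule F_ge[OF lam_meas[OF i j]])
  with ne F0 have Sp: "?S = space M" by blast
  interpret Pi: prob_space "P i" by (rule P_prob[OF i])
  interpret Pj: prob_space "P j" by (rule P_prob[OF j])
  have "emeasure (P i) ?S = 1" using Sp space_P[OF i] Pi.emeasure_space_1 by simp
  moreover have "emeasure (P i) ?S = (\<integral>\<^sup>+ \<omega>\<in>?S. ennreal (exp (lam i j 0 \<omega>)) \<partial>(P j))"
    by (rule lam_dens[OF i j S0])
  ultimately have e1: "1 = (\<integral>\<^sup>+ \<omega>\<in>?S. ennreal (exp (lam i j 0 \<omega>)) \<partial>(P j))" by simp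
  have "(\<integral>\<^sup>+ \<omega>. ennreal (exp a) * indicator ?S \<omega> \<partial>(P j)) \<le>
        (\<integral>\<^sup>+ \<omega>\<in>?S. ennreal (exp (lam i j 0 \<omega>)) \<partial>(P j))"
    by (intro nn_integral_mono) (auto split: split_indicator intro: ennreal_leI)
  moreover have "(\<integral>\<^sup>+ \<omega>. ennreal (exp a) * indicator ?S \<omega> \<partial>(P j)) = ennreal (exp a)"
    using S0 FM P_sets[OF j] Sp space_P[OF j] Pj.emeasure_space_1
    by (subst nn_integral_cmult_indicator) auto
  ultimately have "ennreal (exp a) \<le> 1" using e1 by simp
  moreover have "exp a > 1" using a by simp
  ultimately show False by (simp add: ennreal_le_1)
qed

context
  fixes T d assumes test: "is_test M X Nb N T d"
begin

lemma T_le: "{\<omega>\<in>space M. T \<omega> \<le> n} \<in> sets (obs_filt M X Nb n)"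
  using test unfolding is_test_def by blast

lemma d_le: "\<omega> \<in> space M \<Longrightarrow> d \<omega> \<le> N"
  using test unfolding is_test_def by blast

lemma dT_le: "{\<omega>\<in>space M. d \<omega> = j \<and> T \<omega> \<le> n} \<in> sets (obs_filt M X Nb n)"
  using test unfolding is_test_def by blast

lemma d_sets: "{\<omega>\<in>space M. d \<omega> = j} \<in> sets M"
proof -
  have "{\<omega>\<in>space M. d \<omega> = j} = (\<Union>n. {\<omega>\<in>space M. d \<omega> = j \<and> T \<omega> \<le> n})"
    by auto
  also have "\<dots> \<in> sets M" using dT_le FM by blast
  finally show ?thesis .
qed

lemma dT_eq: "{\<omega>\<in>space M. d \<omega> = j \<and> T \<omega> = n} \<in> sets (obs_filt M X Nb n)"
proof (cases n)
  case 0
  then show ?thesis using dT_le[of j 0] by simp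
next
  case (Suc m)
  have "{\<omega>\<in>space M. d \<omega> = j \<and> T \<omega> = n} =
        {\<omega>\<in>space M. d \<omega> = j \<and> T \<omega> \<le> n} - {\<omega>\<in>space M. T \<omega> \<le> m}"
    using Suc by auto
  also have "\<dots> \<in> sets (obs_filt M X Nb n)"
    using dT_le[of j n] T_le[of m] F_mono[of m n] Suc by auto
  finally show ?thesis .
qed

lemma B_bound:
  assumes i: "i \<le> N" and j: "j \<le> N"
  shows "emeasure (P i) {\<omega>\<in>space M. d \<omega> = i \<and> T \<omega> \<le> L \<and> lam i j (T \<omega>) \<omega> < a}
         \<le> ennreal (exp a) * emeasure (P j) {\<omega>\<in>space M. d \<omega> = i}"
proof -
  define B where "B n = {\<omega>\<in>space M. d \<omega> = i \<and> T \<omega> = n \<and> lam i j n \<omega> < a}" for n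
  have BF: "B n \<in> sets (obs_filt M X Nb n)" for n
  proof -
    have "B n = {\<omega>\<in>space M. d \<omega> = i \<and> T \<omega> = n} \<inter> {\<omega>\<in>space M. lam i j n \<omega> < a}"
      unfolding B_def by auto
    then show ?thesis using dT_eq F_lt[OF lam_meas[OF i j]] by auto
  qed
  have BM: "B n \<in> sets (P k)" if "k \<le> N" for n k using BF FM P_sets[OF that] by blast
  have disj: "disjoint_family_on B {..L}" unfolding disjoint_family_on_def B_def by auto
  have Un: "{\<omega>\<in>space M. d \<omega> = i \<and> T \<omega> \<le> L \<and> lam i j (T \<omega>) \<omega> < a} = (\<Union>n\<in>{..L}. B n)"
    unfolding B_def by auto
  have each: "emeasure (P i) (B n) \<le> ennreal (exp a) * emeasure (P j) (B n)" for n
  proof -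
    have "emeasure (P i) (B n) = (\<integral>\<^sup>+ \<omega>\<in>B n. ennreal (exp (lam i j n \<omega>)) \<partial>(P j))"
      by (rule lam_dens[OF i j BF])
    also have "\<dots> \<le> (\<integral>\<^sup>+ \<omega>. ennreal (exp a) * indicator (B n) \<omega> \<partial>(P j))"
      by (intro nn_integral_mono) (auto simp: B_def split: split_indicator intro: ennreal_leI)
    also have "\<dots> = ennreal (exp a) * emeasure (P j) (B n)"
      using BM[OF j] by (rule nn_integral_cmult_indicator)
    finally show ?thesis .
  qed
  have "emeasure (P i) (\<Union>n\<in>{..L}. B n) = (\<Sum>n\<in>{..L}. emeasure (P i) (B n))"
    using BM[OF i] disj by (intro sum_emeasure[symmetric]) auto
  also have "\<dots> \<le> (\<Sum>n\<in>{..L}. ennreal (exp a) * emeasure (P j) (B n))"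
    by (intro sum_mono each)
  also have "\<dots> = ennreal (exp a) * emeasure (P j) (\<Union>n\<in>{..L}. B n)"
    using sum_emeasure[of B "{..L}" "P j"] BM[OF j] disj by (simp add: sum_distrib_left[symmetric] image_subset_iff)
  also have "\<dots> \<le> ennreal (exp a) * emeasure (P j) {\<omega>\<in>space M. d \<omega> = i}"
    using d_sets[of i] P_sets[OF j] by (intro mult_left_mono emeasure_mono) (auto simp: B_def)
  finally show ?thesis using Un by simp
qed

lemma T_gt_sets: "L \<ge> 0 \<Longrightarrow> {\<omega>\<in>space M. real (T \<omega>) > L} \<in> sets M"
proof -
  assume L: "L \<ge> 0"
  have "real t > L \<longleftrightarrow> \<not> t \<le> nat \<lfloor>L\<rfloor>" for t
    using L by (simp add: le_nat_iff le_floor_iff not_le)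
  then have "{\<omega>\<in>space M. real (T \<omega>) > L} = space M - {\<omega>\<in>space M. T \<omega> \<le> nat \<lfloor>L\<rfloor>}" by auto
  also have "\<dots> \<in> sets M" using T_le FM by blast
  finally show ?thesis .
qed

lemma key:
  assumes i: "i \<le> N" and j: "j \<le> N" and ij: "i \<noteq> j" and a: "a > 0"
  shows "measure (P i) {\<omega>\<in>space M. T \<omega> \<le> L}
     \<le> (\<Sum>l\<in>{..N}-{i}. measure (P i) {\<omega>\<in>space M. d \<omega> = l})
       + exp a * measure (P j) {\<omega>\<in>space M. d \<omega> = i}
       + measure (P i) {\<omega>\<in>space M. Max ((\<lambda>n. lam i j n \<omega>) ` {1..L}) \<ge> a}"
proof -
  interpret Pi: prob_space "P i" by (rule P_prob[OF i])
  interpret Pj: prob_space "P j" by (rule P_prob[OF j])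
  define D where "D = (\<Union>l\<in>{..N}-{i}. {\<omega>\<in>space M. d \<omega> = l})"
  define B where "B = {\<omega>\<in>space M. d \<omega> = i \<and> T \<omega> \<le> L \<and> lam i j (T \<omega>) \<omega> < a}"
  define E where "E = {\<omega>\<in>space M. Max ((\<lambda>n. lam i j n \<omega>) ` {1..L}) \<ge> a}"
  have DM: "D \<in> sets M" unfolding D_def using d_sets by auto
  have dM: "{\<omega>\<in>space M. d \<omega> = i} \<in> sets M" by (rule d_sets)
  have BM: "B \<in> sets M"
  proof -
    have "B = (\<Union>n\<in>{..L}. {\<omega>\<in>space M. d \<omega> = i \<and> T \<omega> = n} \<inter> {\<omega>\<in>space M. lam i j n \<omega> < a})"
      unfolding B_def by auto
    also have "\<dots> \<in> sets M"
      using dT_eq F_lt[OF lam_meas[OF i j]] FM by blast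
    finally show ?thesis .
  qed
  have EM: "E \<in> sets M"
  proof -
    have m: "(\<lambda>\<omega>. Max ((\<lambda>n. lam i j n \<omega>) ` {1..L})) \<in> borel_measurable M"
      by (intro borel_measurable_Max lam_measM[OF i j]) auto
    have "(\<lambda>\<omega>. Max ((\<lambda>n. lam i j n \<omega>) ` {1..L})) -` {a..} \<inter> space M \<in> sets M"
      using measurable_sets[OF m] by auto
    moreover have "(\<lambda>\<omega>. Max ((\<lambda>n. lam i j n \<omega>) ` {1..L})) -` {a..} \<inter> space M = E"
      unfolding E_def by auto
    ultimately show ?thesis by simp
  qed
  have sub: "{\<omega>\<in>space M. T \<omega> \<le> L} \<subseteq> D \<union> B \<union> E"
  proof
    fix \<omega> assume w: "\<omega> \<in> {\<omega>\<in>space M. T \<omega> \<le> L}"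
    show "\<omega> \<in> D \<union> B \<union> E"
    proof (cases "d \<omega> = i")
      case False
      then show ?thesis using w d_le[of \<omega>] unfolding D_def by auto
    next
      case di: True
      show ?thesis
      proof (cases "lam i j (T \<omega>) \<omega> < a")
        case True then show ?thesis using w di unfolding B_def by auto
      next
        case False
        show ?thesis
        proof (cases "T \<omega> = 0")
          case True
          then have "\<omega> \<in> {\<omega>\<in>space M. lam i j 0 \<omega> \<ge> a}" using False w by auto
          then show ?thesis using Z_empty[OF i j a] by blast
        next
          case T0: False
          have "lam i j (T \<omega>) \<omega> \<le> Max ((\<lambda>n. lam i j n \<omega>) ` {1..L})"
            using T0 w by (intro Max_ge) auto
          then show ?thesis using False w unfolding E_def by auto
        qed
      qed
    qed
  qed
  have "measure (P i) {\<omega>\<in>space M. T \<omega> \<le> L} \<le> measure (P i) (D \<union> B \<union> E)"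
    using sub DM BM EM P_sets[OF i] by (intro Pi.finite_measure_mono) auto
  also have "\<dots> \<le> measure (P i) D + measure (P i) B + measure (P i) E"
  proof -
    have "measure (P i) (D \<union> B \<union> E) \<le> measure (P i) (D \<union> B) + measure (P i) E"
      using DM BM EM P_sets[OF i] by (intro measure_Un_le) auto
    moreover have "measure (P i) (D \<union> B) \<le> measure (P i) D + measure (P i) B"
      using DM BM EM P_sets[OF i] by (intro measure_Un_le) auto
    ultimately show ?thesis by linarith
  qed
  also have "measure (P i) D \<le> (\<Sum>l\<in>{..N}-{i}. measure (P i) {\<omega>\<in>space M. d \<omega> = l})"
    unfolding D_def using d_sets P_sets[OF i] by (intro measure_UNION_le) auto
  also have "measure (P i) B \<le> exp a * measure (P j) {\<omega>\<in>space M. d \<omega> = i}"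
  proof -
    have "ennreal (measure (P i) B) \<le> ennreal (exp a) * ennreal (measure (P j) {\<omega>\<in>space M. d \<omega> = i})"
      using B_bound[OF i j, of L a] BM dM P_sets[OF i] P_sets[OF j]
      by (simp add: B_def Pi.emeasure_eq_measure Pj.emeasure_eq_measure)
    then show ?thesis by (subst (asm) ennreal_mult[symmetric]) (auto simp: ennreal_le_iff)
  qed
  finally show ?thesis unfolding E_def by simp
qed

end

lemma Max_meas: "i \<le> N \<Longrightarrow> j \<le> N \<Longrightarrow> (\<lambda>\<omega>. Max ((\<lambda>n. lam i j n \<omega>) ` {1..L})) \<in> borel_measurable M"
  by (intro borel_measurable_Max lam_measM) auto

lemma ge_sets: "g \<in> borel_measurable M \<Longrightarrow> {\<omega>\<in>space M. g \<omega> \<ge> (c::real)} \<in> sets M"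
proof -
  assume m: "g \<in> borel_measurable M"
  have "g -` {c..} \<inter> space M \<in> sets M" using measurable_sets[OF m] by auto
  moreover have "g -` {c..} \<inter> space M = {\<omega>\<in>space M. g \<omega> \<ge> c}" by auto
  ultimately show ?thesis by simp
qed

end

locale sht2 = sht M X Nb N P lam
  for M :: "'w measure" and X :: "nat \<Rightarrow> 'w \<Rightarrow> 'b" and Nb :: "'b measure"
    and N :: nat and P :: "nat \<Rightarrow> 'w measure"
    and lam :: "nat \<Rightarrow> nat \<Rightarrow> nat \<Rightarrow> 'w \<Rightarrow> real" +
  fixes \<psi> :: "real \<Rightarrow> real" and I :: "nat \<Rightarrow> nat \<Rightarrow> real"
    and \<alpha> :: "nat \<Rightarrow> nat \<Rightarrow> nat \<Rightarrow> real"
  assumes N1: "N \<ge> 1"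
    and psi_mono: "strict_mono_on {0<..} \<psi>"
    and psi_bij: "bij_betw \<psi> {0<..} {0<..}"
    and Psi_top: "filterlim (inv_into {0<..} \<psi>) at_top at_top"
    and I_pos: "\<And>i j. i \<le> N \<Longrightarrow> j \<le> N \<Longrightarrow> i \<noteq> j \<Longrightarrow> 0 < I i j"
    and hyp: "\<And>\<epsilon> i j. \<epsilon> > 0 \<Longrightarrow> i \<le> N \<Longrightarrow> j \<le> N \<Longrightarrow> i \<noteq> j \<Longrightarrow>
        (\<lambda>L::nat. measure (P i) {\<omega>\<in>space M.
            Max ((\<lambda>n. lam i j n \<omega>) ` {1..L}) / \<psi> (real L) \<ge> (1 + \<epsilon>) * I i j})
        \<longlonglongrightarrow> 0"
    and a_pos: "\<And>k i j. i \<le> N \<Longrightarrow> j \<le> N \<Longrightarrow> i \<noteq> j \<Longrightarrow> 0 < \<alpha> k i j \<and> \<alpha> k i j < 1"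
    and a_lim: "(\<lambda>k. alpha_max N (\<alpha> k)) \<longlonglongrightarrow> 0"
begin

abbreviation "\<Psi> \<equiv> inv_into {0<..} \<psi>"

lemma Psi_pos: "x > 0 \<Longrightarrow> \<Psi> x > 0"
  using psi_bij by (metis bij_betw_def greaterThan_iff inv_into_into)

lemma psi_Psi: "x > 0 \<Longrightarrow> \<psi> (\<Psi> x) = x"
  using psi_bij by (simp add: bij_betw_def f_inv_into_f)

lemma psi_pos: "x > 0 \<Longrightarrow> \<psi> x > 0"
  using psi_bij by (auto simp: bij_betw_def)

lemma psi_le: "0 < x \<Longrightarrow> x \<le> y \<Longrightarrow> \<psi> x \<le> \<psi> y"
  using psi_mono by (metis greaterThan_iff le_less order_less_le_trans strict_mono_onD)

lemma aset_eq: "{\<alpha> k i j | i j. i \<le> N \<and> j \<le> N \<and> i \<noteq> j} =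
   (\<lambda>(i,j). \<alpha> k i j) ` {(i,j). i \<le> N \<and> j \<le> N \<and> i \<noteq> j}"
  by auto

lemma aset_fin: "finite {\<alpha> k i j | i j. i \<le> N \<and> j \<le> N \<and> i \<noteq> j}"
proof -
  have "{(i,j). i \<le> N \<and> j \<le> N \<and> i \<noteq> j} \<subseteq> {..N} \<times> {..N}" by auto
  then have "finite {(i,j). i \<le> N \<and> j \<le> N \<and> i \<noteq> j}" by (rule finite_subset) auto
  then show ?thesis unfolding aset_eq by auto
qed

lemma a_le: "i \<le> N \<Longrightarrow> j \<le> N \<Longrightarrow> i \<noteq> j \<Longrightarrow> \<alpha> k i j \<le> alpha_max N (\<alpha> k)"
  unfolding alpha_max_def by (rule Max_ge[OF aset_fin]) blast

lemma amax_pos: "alpha_max N (\<alpha> k) > 0"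
proof -
  have "\<alpha> k 0 1 > 0" using a_pos[of 0 1 k] N1 by auto
  also have "\<alpha> k 0 1 \<le> alpha_max N (\<alpha> k)" using a_le[of 0 1 k] N1 by auto
  finally show ?thesis .
qed

lemma a_lim0: "i \<le> N \<Longrightarrow> j \<le> N \<Longrightarrow> i \<noteq> j \<Longrightarrow> (\<lambda>k. \<alpha> k i j) \<longlonglongrightarrow> 0"
proof -
  assume h: "i \<le> N" "j \<le> N" "i \<noteq> j"
  show ?thesis
  proof (rule tendsto_sandwich[OF _ _ tendsto_const a_lim])
    show "\<forall>\<^sub>F k in sequentially. 0 \<le> \<alpha> k i j"
      by (rule always_eventually) (use h a_pos[of i j] in \<open>auto simp: less_eq_real_def\<close>)
    show "\<forall>\<^sub>F k in sequentially. \<alpha> k i j \<le> alpha_max N (\<alpha> k)"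
      by (rule always_eventually) (use h a_le in \<open>blast\<close>)
  qed
qed

lemma ln_amax: "filterlim (\<lambda>k. - ln (alpha_max N (\<alpha> k))) at_top sequentially"
proof -
  have "filterlim (\<lambda>k. alpha_max N (\<alpha> k)) (at_right 0) sequentially"
    by (intro filterlim_at_withinI a_lim) (auto intro: always_eventually amax_pos)
  from filterlim_compose[OF ln_at_0 this]
  show ?thesis using filterlim_uminus_at_top[of "\<lambda>k. - ln (alpha_max N (\<alpha> k))"] by simp
qed

definition m :: "nat \<Rightarrow> nat \<Rightarrow> real" where
  "m k i = Max {\<bar>ln (\<alpha> k j i)\<bar> / I i j | j. j \<le> N \<and> j \<noteq> i}"

lemma mset_eq: "{\<bar>ln (\<alpha> k j i)\<bar> / I i j | j. j \<le> N \<and> j \<noteq> i} =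
   (\<lambda>j. \<bar>ln (\<alpha> k j i)\<bar> / I i j) ` ({..N} - {i})"
  by auto

lemma ex_other: "i \<le> N \<Longrightarrow> \<exists>j. j \<le> N \<and> j \<noteq> i"
  using N1 by (cases "i = 0") (auto intro: exI[of _ 0] exI[of _ 1])

lemma m_ge: "i \<le> N \<Longrightarrow> j \<le> N \<Longrightarrow> j \<noteq> i \<Longrightarrow> \<bar>ln (\<alpha> k j i)\<bar> / I i j \<le> m k i"
  unfolding m_def mset_eq by (rule Max_ge) auto

lemma m_attain: "i \<le> N \<Longrightarrow> \<exists>j. j \<le> N \<and> j \<noteq> i \<and> m k i = \<bar>ln (\<alpha> k j i)\<bar> / I i j"
proof -
  assume i: "i \<le> N"
  have "m k i \<in> (\<lambda>j. \<bar>ln (\<alpha> k j i)\<bar> / I i j) ` ({..N} - {i})"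
    unfolding m_def mset_eq using ex_other[OF i] by (intro Max_in) auto
  then show ?thesis by auto
qed

lemma lnpos: "i \<le> N \<Longrightarrow> j \<le> N \<Longrightarrow> i \<noteq> j \<Longrightarrow> \<bar>ln (\<alpha> k i j)\<bar> = - ln (\<alpha> k i j) \<and> - ln (\<alpha> k i j) > 0"
  using a_pos[of i j k] by (simp add: ln_less_zero)

lemma m_pos: "i \<le> N \<Longrightarrow> m k i > 0"
proof -
  assume i: "i \<le> N"
  obtain j where j: "j \<le> N" "j \<noteq> i" "m k i = \<bar>ln (\<alpha> k j i)\<bar> / I i j" using m_attain[OF i] by blast
  then show ?thesis using lnpos[of j i k] I_pos[of i j] i by (simp add: divide_neg_pos)
qed

lemma m_top: "i \<le> N \<Longrightarrow> filterlim (\<lambda>k. m k i) at_top sequentially"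
proof -
  assume i: "i \<le> N"
  obtain j where j: "j \<le> N" "j \<noteq> i" using ex_other[OF i] by blast
  have Ip: "I i j > 0" using I_pos i j by auto
  have "filterlim (\<lambda>k. (1 / I i j) * (- ln (alpha_max N (\<alpha> k)))) at_top sequentially"
    by (rule filterlim_tendsto_pos_mult_at_top[OF tendsto_const _ ln_amax]) (simp add: Ip)
  moreover have "(1 / I i j) * (- ln (alpha_max N (\<alpha> k))) \<le> m k i" for k
  proof -
    have "- ln (alpha_max N (\<alpha> k)) \<le> - ln (\<alpha> k j i)"
      using a_le[of j i k] a_pos[of j i k] j i by (simp add: amax_pos)
    also have "\<dots> = \<bar>ln (\<alpha> k j i)\<bar>" using lnpos[of j i k] j i by simp
    finally have "(1 / I i j) * (- ln (alpha_max N (\<alpha> k))) \<le> \<bar>ln (\<alpha> k j i)\<bar> / I i j"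
      using Ip divide_right_mono[of "- ln (alpha_max N (\<alpha> k))" "\<bar>ln (\<alpha> k j i)\<bar>" "I i j"] by simp
    also have "\<dots> \<le> m k i" using m_ge[OF i j] by simp
    finally show ?thesis .
  qed
  ultimately show ?thesis
    by (metis (no_types, lifting) always_eventually filterlim_at_top_mono)
qed

lemma part1:
  assumes i: "i \<le> N" and e0: "0 < \<epsilon>" and e1: "\<epsilon> < 1" and eta: "\<eta> > 0"
  shows "\<forall>\<^sub>F k in sequentially. \<forall>(T, d)\<in>C_sim M X Nb N P (\<alpha> k).
     measure (P i) {\<omega>\<in>space M. real (T \<omega>) > \<Psi> ((1 - \<epsilon>) * m k i)} \<ge> 1 - \<eta>"
proof -
  interpret Pi: prob_space "P i" by (rule P_prob[OF i])
  define L where "L k = \<Psi> ((1 - \<epsilon>) * m k i)" for k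
  define K where "K k = nat \<lfloor>L k\<rfloor>" for k
  have Lpos: "L k > 0" for k unfolding L_def using m_pos[OF i] e1 by (intro Psi_pos) auto
  have psiL: "\<psi> (L k) = (1 - \<epsilon>) * m k i" for k unfolding L_def using m_pos[OF i] e1 by (intro psi_Psi) auto
  have "filterlim (\<lambda>k. (1 - \<epsilon>) * m k i) at_top sequentially"
    by (rule filterlim_tendsto_pos_mult_at_top[OF tendsto_const _ m_top[OF i]]) (use e1 in auto)
  from filterlim_compose[OF Psi_top this] have Ltop: "filterlim L at_top sequentially"
    unfolding L_def .
  have Ktop: "filterlim K sequentially sequentially"
    unfolding K_def
    by (rule filterlim_compose[OF filterlim_nat_sequentially filterlim_compose[OF filterlim_floor_sequentially Ltop]])
  define h where "h j n = measure (P i) {\<omega>\<in>space M.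
            Max ((\<lambda>n. lam i j n \<omega>) ` {1..n}) / \<psi> (real n) \<ge> (1 + \<epsilon>) * I i j}" for j n
  define u where "u k = (\<Sum>l\<in>{..N}-{i}. \<alpha> k i l) + alpha_max N (\<alpha> k) powr (\<epsilon>\<^sup>2)
     + (\<Sum>j\<in>{..N}-{i}. h j (K k))" for k
  have u0: "u \<longlonglongrightarrow> 0"
  proof -
    have t1: "(\<lambda>k. \<Sum>l\<in>{..N}-{i}. \<alpha> k i l) \<longlonglongrightarrow> 0"
      by (rule tendsto_null_sum) (use i a_lim0 in auto)
    have t2: "(\<lambda>k. alpha_max N (\<alpha> k) powr (\<epsilon>\<^sup>2)) \<longlonglongrightarrow> 0"
      by (rule tendsto_zero_powrI[OF a_lim tendsto_const]) (use e0 amax_pos less_imp_le in \<open>auto intro: always_eventually\<close>)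
    have t3: "(\<lambda>k. \<Sum>j\<in>{..N}-{i}. h j (K k)) \<longlonglongrightarrow> 0"
    proof (rule tendsto_null_sum)
      fix j assume j: "j \<in> {..N}-{i}"
      have "h j \<longlonglongrightarrow> 0" unfolding h_def using hyp[of \<epsilon> i j] e0 i j by auto
      from filterlim_compose[OF this Ktop] show "(\<lambda>k. h j (K k)) \<longlonglongrightarrow> 0" .
    qed
    show ?thesis unfolding u_def by (intro tendsto_add_zero t1 t2 t3)
  qed
  have ev1: "\<forall>\<^sub>F k in sequentially. u k < \<eta>" using order_tendstoD(2)[OF u0 eta] .
  have ev2: "\<forall>\<^sub>F k in sequentially. K k \<ge> 1" using Ktop by (simp add: filterlim_iff)
  show ?thesis
  proof (rule eventually_mono[OF eventually_conj[OF ev1 ev2]])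
    fix k assume uk: "u k < \<eta> \<and> K k \<ge> 1"
    show "\<forall>(T, d)\<in>C_sim M X Nb N P (\<alpha> k).
     measure (P i) {\<omega>\<in>space M. real (T \<omega>) > \<Psi> ((1 - \<epsilon>) * m k i)} \<ge> 1 - \<eta>"
    proof (clarify)
      fix T d assume Td: "(T, d) \<in> C_sim M X Nb N P (\<alpha> k)"
      have test: "is_test M X Nb N T d" using Td unfolding C_sim_def by auto
      have err: "\<And>a b. a \<le> N \<Longrightarrow> b \<le> N \<Longrightarrow> a \<noteq> b \<Longrightarrow> measure (P a) {\<omega>\<in>space M. d \<omega> = b} \<le> \<alpha> k a b"
        using Td unfolding C_sim_def by auto
      obtain j where j: "j \<le> N" "j \<noteq> i" "m k i = \<bar>ln (\<alpha> k j i)\<bar> / I i j" using m_attain[OF i] by blast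
      have Ip: "I i j > 0" using I_pos i j by auto
      have lnj: "\<bar>ln (\<alpha> k j i)\<bar> = - ln (\<alpha> k j i)" "- ln (\<alpha> k j i) > 0" using lnpos[of j i k] j i by auto
      have apj: "\<alpha> k j i > 0" using a_pos[of j i k] j i by auto
      define a where "a = (1 + \<epsilon>) * I i j * \<psi> (L k)"
      have a_eq: "a = (1 - \<epsilon>\<^sup>2) * (- ln (\<alpha> k j i))"
        unfolding a_def psiL j(3) lnj(1) using Ip by (simp add: power2_eq_square field_simps)
      have "\<epsilon>\<^sup>2 < 1" using e0 e1 by (simp add: power_less_one_iff abs_less_iff)
      then have apos: "a > 0" unfolding a_eq using lnj by (intro mult_pos_pos) auto
      have K: "measure (P i) {\<omega>\<in>space M. T \<omega> \<le> K k}
         \<le> (\<Sum>l\<in>{..N}-{i}. measure (P i) {\<omega>\<in>space M. d \<omega> = l})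
           + exp a * measure (P j) {\<omega>\<in>space M. d \<omega> = i}
           + measure (P i) {\<omega>\<in>space M. Max ((\<lambda>n. lam i j n \<omega>) ` {1..K k}) \<ge> a}"
        by (rule key[OF test i j(1)]) (use j apos in auto)
      have b1: "(\<Sum>l\<in>{..N}-{i}. measure (P i) {\<omega>\<in>space M. d \<omega> = l}) \<le> (\<Sum>l\<in>{..N}-{i}. \<alpha> k i l)"
        by (rule sum_mono) (use err i in auto)
      have b2: "exp a * measure (P j) {\<omega>\<in>space M. d \<omega> = i} \<le> alpha_max N (\<alpha> k) powr (\<epsilon>\<^sup>2)"
      proof -
        have "exp a * measure (P j) {\<omega>\<in>space M. d \<omega> = i} \<le> exp a * \<alpha> k j i"
          using err[of j i] j i by (intro mult_left_mono) auto
        also have "\<dots> = \<alpha> k j i powr (\<epsilon>\<^sup>2)"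
        proof -
          have "exp a * \<alpha> k j i = exp a * exp (ln (\<alpha> k j i))" using apj by simp
          also have "\<dots> = exp (\<epsilon>\<^sup>2 * ln (\<alpha> k j i))" unfolding a_eq
            by (simp add: exp_add[symmetric] algebra_simps)
          finally show ?thesis using apj by (simp add: powr_def)
        qed
        also have "\<dots> \<le> alpha_max N (\<alpha> k) powr (\<epsilon>\<^sup>2)"
          using a_le[of j i k] j i apj e0 by (intro powr_mono2) auto
        finally show ?thesis .
      qed
      have b3: "measure (P i) {\<omega>\<in>space M. Max ((\<lambda>n. lam i j n \<omega>) ` {1..K k}) \<ge> a} \<le> (\<Sum>j\<in>{..N}-{i}. h j (K k))"
      proof -
        have Kpos: "real (K k) > 0" using uk by auto
        have KL: "real (K k) \<le> L k" unfolding K_def using Lpos[of k]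
          by (simp add: of_nat_nat) 
        have psK: "\<psi> (real (K k)) > 0" "\<psi> (real (K k)) \<le> \<psi> (L k)"
          using psi_pos[OF Kpos] psi_le[OF Kpos KL] by auto
        have sub: "{\<omega>\<in>space M. Max ((\<lambda>n. lam i j n \<omega>) ` {1..K k}) \<ge> a} \<subseteq>
          {\<omega>\<in>space M. Max ((\<lambda>n. lam i j n \<omega>) ` {1..K k}) / \<psi> (real (K k)) \<ge> (1 + \<epsilon>) * I i j}"
        proof clarify
          fix \<omega> assume w: "\<omega> \<in> space M" "a \<le> Max ((\<lambda>n. lam i j n \<omega>) ` {1..K k})"
          have "(1 + \<epsilon>) * I i j * \<psi> (real (K k)) \<le> a"
            unfolding a_def using psK Ip e0 by (intro mult_left_mono) auto
          then show "(1 + \<epsilon>) * I i j \<le> Max ((\<lambda>n. lam i j n \<omega>) ` {1..K k}) / \<psi> (real (K k))"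
            using w psK by (simp add: pos_le_divide_eq)
        qed
        have "measure (P i) {\<omega>\<in>space M. Max ((\<lambda>n. lam i j n \<omega>) ` {1..K k}) \<ge> a} \<le> h j (K k)"
          unfolding h_def
        proof (rule Pi.finite_measure_mono[OF sub])
          have "(\<lambda>\<omega>. Max ((\<lambda>n. lam i j n \<omega>) ` {1..K k}) / \<psi> (real (K k))) \<in> borel_measurable M"
            using Max_meas[OF i j(1), of "K k"] by measurable
          from ge_sets[OF this] show "{\<omega>\<in>space M. Max ((\<lambda>n. lam i j n \<omega>) ` {1..K k}) / \<psi> (real (K k)) \<ge> (1 + \<epsilon>) * I i j} \<in> sets (P i)"
            using P_sets[OF i] by auto
        qed
        also have "\<dots> \<le> (\<Sum>j\<in>{..N}-{i}. h j (K k))"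
          by (rule member_le_sum) (use j in \<open>auto simp: h_def\<close>)
        finally show ?thesis .
      qed
      have le: "measure (P i) {\<omega>\<in>space M. T \<omega> \<le> K k} < \<eta>"
        using K b1 b2 b3 uk unfolding u_def by linarith
      have Sset: "{\<omega>\<in>space M. T \<omega> \<le> K k} \<in> Pi.events"
        using T_le[OF test] FM P_sets[OF i] by blast
      have eqs: "{\<omega>\<in>space M. real (T \<omega>) > \<Psi> ((1 - \<epsilon>) * m k i)} = space (P i) - {\<omega>\<in>space M. T \<omega> \<le> K k}"
      proof -
        have "real t > L k \<longleftrightarrow> \<not> t \<le> K k" for t
          unfolding K_def using Lpos[of k] by (simp add: le_nat_iff le_floor_iff not_le)
        then show ?thesis using space_P[OF i] unfolding L_def by auto
      qed
      show "measure (P i) {\<omega>\<in>space M. real (T \<omega>) > \<Psi> ((1 - \<epsilon>) * m k i)} \<ge> 1 - \<eta>"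
        unfolding eqs Pi.prob_compl[OF Sset] using le by linarith
    qed
  qed
qed

lemma part2:
  assumes r: "r \<ge> 1" and i: "i \<le> N" and eta: "\<eta> > 0"
    and Psi_ratio: "\<exists>g. (\<forall>\<^sub>F \<delta> in at 1.
          ((\<lambda>t. \<Psi> (\<delta> * t) / \<Psi> t) \<longlongrightarrow> g \<delta>) at_top)
          \<and> (g \<longlongrightarrow> 1) (at 1)"
  shows "\<forall>\<^sub>F k in sequentially. \<forall>(T, d)\<in>C_sim M X Nb N P (\<alpha> k).
            (\<integral>\<^sup>+ \<omega>. ennreal (real (T \<omega>) powr r) \<partial>(P i))
            \<ge> ennreal ((1 - \<eta>) * \<Psi> (m k i) powr r)"
proof (cases "\<eta> \<ge> 1")
  case True
  have "(1 - \<eta>) * \<Psi> (m k i) powr r \<le> 0" for k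
    using True by (intro mult_nonpos_nonneg) auto
  then have "ennreal ((1 - \<eta>) * \<Psi> (m k i) powr r) = 0" for k
    by (simp add: ennreal_eq_0_iff)
  then show ?thesis by (auto intro: always_eventually)
next
  case False
  interpret Pi: prob_space "P i" by (rule P_prob[OF i])
  define s where "s = sqrt (1 - \<eta>)"
  have s: "0 < s" "s < 1" "s * s = 1 - \<eta>" using False eta unfolding s_def by auto
  define \<theta> where "\<theta> = s powr (1 / r)"
  have th: "0 < \<theta>" "\<theta> < 1" "\<theta> powr r = s"
    using s r powr_less_mono2[of "1/r" s 1] unfolding \<theta>_def by (auto simp: powr_powr)
  obtain g where g1: "\<forall>\<^sub>F \<delta> in at 1. ((\<lambda>t. \<Psi> (\<delta> * t) / \<Psi> t) \<longlongrightarrow> g \<delta>) at_top"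
    and g2: "(g \<longlongrightarrow> 1) (at 1)" using Psi_ratio by blast
  have "\<forall>\<^sub>F \<delta> in at 1. ((\<lambda>t. \<Psi> (\<delta> * t) / \<Psi> t) \<longlongrightarrow> g \<delta>) at_top \<and> g \<delta> > \<theta>"
    using g1 order_tendstoD(1)[OF g2 th(2)] by eventually_elim auto
  then obtain dd where dd: "dd > 0" and ddP: "\<And>x. x \<noteq> 1 \<Longrightarrow> dist x 1 < dd \<Longrightarrow>
      ((\<lambda>t. \<Psi> (x * t) / \<Psi> t) \<longlongrightarrow> g x) at_top \<and> g x > \<theta>"
    unfolding eventually_at by auto
  define \<delta> where "\<delta> = 1 - min (dd / 2) (1 / 2)"
  have dl: "\<delta> < 1" "\<delta> > 0" "\<delta> \<noteq> 1" "dist \<delta> 1 < dd" using dd unfolding \<delta>_def dist_real_def by auto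
  have glim: "((\<lambda>t. \<Psi> (\<delta> * t) / \<Psi> t) \<longlongrightarrow> g \<delta>) at_top" and gth: "g \<delta> > \<theta>"
    using ddP[OF dl(3,4)] by auto
  define \<epsilon> where "\<epsilon> = 1 - \<delta>"
  have e: "0 < \<epsilon>" "\<epsilon> < 1" "1 - \<epsilon> = \<delta>" using dl unfolding \<epsilon>_def by auto
  have ev1: "\<forall>\<^sub>F k in sequentially. \<forall>(T, d)\<in>C_sim M X Nb N P (\<alpha> k).
     measure (P i) {\<omega>\<in>space M. real (T \<omega>) > \<Psi> (\<delta> * m k i)} \<ge> s"
    using part1[OF i e(1) e(2), of "1 - s"] s e(3) by simp
  have ev2: "\<forall>\<^sub>F k in sequentially. \<Psi> (\<delta> * m k i) / \<Psi> (m k i) > \<theta>"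
    using order_tendstoD(1)[OF filterlim_compose[OF glim m_top[OF i]] gth] .
  show ?thesis
  proof (rule eventually_mono[OF eventually_conj[OF ev1 ev2]], clarify)
    fix k T d
    assume A: "\<forall>(T, d)\<in>C_sim M X Nb N P (\<alpha> k).
       measure (P i) {\<omega>\<in>space M. real (T \<omega>) > \<Psi> (\<delta> * m k i)} \<ge> s"
      and B: "\<Psi> (\<delta> * m k i) / \<Psi> (m k i) > \<theta>"
      and Td: "(T, d) \<in> C_sim M X Nb N P (\<alpha> k)"
    have test: "is_test M X Nb N T d" using Td unfolding C_sim_def by auto
    define Lk where "Lk = \<Psi> (\<delta> * m k i)"
    define Pk where "Pk = \<Psi> (m k i)"
    have Lpos: "Lk > 0" unfolding Lk_def using m_pos[OF i] dl by (intro Psi_pos) auto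
    have Ppos: "Pk > 0" unfolding Pk_def using m_pos[OF i] by (intro Psi_pos) auto
    have LP: "\<theta> * Pk < Lk" using B Ppos unfolding Lk_def Pk_def by (simp add: pos_less_divide_eq)
    define S where "S = {\<omega>\<in>space M. real (T \<omega>) > Lk}"
    have SM: "S \<in> sets (P i)" unfolding S_def using T_gt_sets[OF test, of Lk] Lpos P_sets[OF i] by auto
    have mS: "measure (P i) S \<ge> s" using A Td unfolding S_def Lk_def by auto
    have "(\<integral>\<^sup>+ \<omega>. ennreal (Lk powr r) * indicator S \<omega> \<partial>(P i)) \<le> (\<integral>\<^sup>+ \<omega>. ennreal (real (T \<omega>) powr r) \<partial>(P i))"
    proof (intro nn_integral_mono)
      fix \<omega> assume "\<omega> \<in> space (P i)"
      show "ennreal (Lk powr r) * indicator S \<omega> \<le> ennreal (real (T \<omega>) powr r)"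
      proof (cases "\<omega> \<in> S")
        case True
        then have "Lk \<le> real (T \<omega>)" unfolding S_def by auto
        then have "Lk powr r \<le> real (T \<omega>) powr r" using Lpos r by (intro powr_mono2) auto
        then show ?thesis using True by (auto intro: ennreal_leI)
      qed auto
    qed
    moreover have "(\<integral>\<^sup>+ \<omega>. ennreal (Lk powr r) * indicator S \<omega> \<partial>(P i)) = ennreal (Lk powr r * measure (P i) S)"
      using SM by (simp add: nn_integral_cmult_indicator Pi.emeasure_eq_measure ennreal_mult)
    moreover have "(1 - \<eta>) * Pk powr r \<le> Lk powr r * measure (P i) S"
    proof -
      have "s * Pk powr r = (\<theta> * Pk) powr r" using th Ppos by (simp add: powr_mult)
      also have "\<dots> \<le> Lk powr r" using LP th Ppos r by (intro powr_mono2) auto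
      finally have 1: "s * Pk powr r \<le> Lk powr r" .
      have "(1 - \<eta>) * Pk powr r = s * (s * Pk powr r)" using s(3) by (simp only: mult.assoc[symmetric])
      also have "\<dots> \<le> s * Lk powr r" using 1 s by (intro mult_left_mono) auto
      also have "\<dots> \<le> measure (P i) S * Lk powr r" using mS by (intro mult_right_mono) auto
      finally show ?thesis by (simp add: mult.commute)
    qed
    ultimately show "(\<integral>\<^sup>+ \<omega>. ennreal (real (T \<omega>) powr r) \<partial>(P i)) \<ge> ennreal ((1 - \<eta>) * \<Psi> (m k i) powr r)"
      unfolding Pk_def by (metis ennreal_leI order_trans)
  qed
qed

end

theorem corollary1:
  fixes M :: "'w measure" and X :: "nat \<Rightarrow> 'w \<Rightarrow> 'b" and Nb :: "'b measure"
    and N :: nat and P :: "nat \<Rightarrow> 'w measure"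
    and lam :: "nat \<Rightarrow> nat \<Rightarrow> nat \<Rightarrow> 'w \<Rightarrow> real"
    and \<psi> :: "real \<Rightarrow> real" and I :: "nat \<Rightarrow> nat \<Rightarrow> real"
  assumes N1: "N \<ge> 1"
    and X_meas: "\<And>t. X t \<in> measurable M Nb"
    and P_prob: "\<And>i. i \<le> N \<Longrightarrow> prob_space (P i)"
    and P_sets: "\<And>i. i \<le> N \<Longrightarrow> sets (P i) = sets M"
    and llr: "is_llr M X Nb N P lam"
    and psi_mono: "strict_mono_on {0<..} \<psi>"
    and psi_bij: "bij_betw \<psi> {0<..} {0<..}"
    and psi_top: "filterlim \<psi> at_top at_top"
    and Psi_top: "filterlim (inv_into {0<..} \<psi>) at_top at_top"
    and Psi_ratio: "\<exists>g. (\<forall>\<^sub>F \<delta> in at 1.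
          ((\<lambda>t. inv_into {0<..} \<psi> (\<delta> * t) / inv_into {0<..} \<psi> t) \<longlongrightarrow> g \<delta>) at_top)
          \<and> (g \<longlongrightarrow> 1) (at 1)"
    and I_pos: "\<And>i j. i \<le> N \<Longrightarrow> j \<le> N \<Longrightarrow> i \<noteq> j \<Longrightarrow> 0 < I i j"
    and hyp: "\<And>\<epsilon> i j. \<epsilon> > 0 \<Longrightarrow> i \<le> N \<Longrightarrow> j \<le> N \<Longrightarrow> i \<noteq> j \<Longrightarrow>
        (\<lambda>L::nat. measure (P i) {\<omega>\<in>space M.
            Max ((\<lambda>n. lam i j n \<omega>) ` {1..L}) / \<psi> (real L) \<ge> (1 + \<epsilon>) * I i j})
        \<longlonglongrightarrow> 0"
  shows
    "\<forall>(\<alpha> :: nat \<Rightarrow> nat \<Rightarrow> nat \<Rightarrow> real) (c :: nat \<Rightarrow> nat \<Rightarrow> real).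
       (\<forall>k i j. i \<le> N \<longrightarrow> j \<le> N \<longrightarrow> i \<noteq> j \<longrightarrow> 0 < \<alpha> k i j \<and> \<alpha> k i j < 1) \<and>
       ((\<lambda>k. alpha_max N (\<alpha> k)) \<longlonglongrightarrow> 0) \<and>
       (\<forall>i j. i \<le> N \<longrightarrow> j \<le> N \<longrightarrow> i \<noteq> j \<longrightarrow>
          0 < c i j \<and> c i j \<le> 1 \<and>
          (\<lambda>k. \<bar>ln (\<alpha> k i j)\<bar> / \<bar>ln (alpha_max N (\<alpha> k))\<bar>) \<longlonglongrightarrow> c i j)
       \<longrightarrow>
       (\<forall>i\<le>N. \<forall>\<epsilon>. 0 < \<epsilon> \<and> \<epsilon> < 1 \<longrightarrow> (\<forall>\<eta>>0. \<forall>\<^sub>F k in sequentially.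
          \<forall>(T, d)\<in>C_sim M X Nb N P (\<alpha> k).
            measure (P i) {\<omega>\<in>space M. real (T \<omega>) > inv_into {0<..} \<psi>
               ((1 - \<epsilon>) * Max {\<bar>ln (\<alpha> k j i)\<bar> / I i j | j. j \<le> N \<and> j \<noteq> i})}
            \<ge> 1 - \<eta>)) \<and>
       (\<forall>r::real. r \<ge> 1 \<longrightarrow> (\<forall>i\<le>N. \<forall>\<eta>>0. \<forall>\<^sub>F k in sequentially.
          \<forall>(T, d)\<in>C_sim M X Nb N P (\<alpha> k).
            (\<integral>\<^sup>+ \<omega>. ennreal (real (T \<omega>) powr r) \<partial>(P i))
            \<ge> ennreal ((1 - \<eta>) * (inv_into {0<..} \<psi>
                 (Max {\<bar>ln (\<alpha> k j i)\<bar> / I i j | j. j \<le> N \<and> j \<noteq> i})) powr r)))"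
proof (intro allI impI)
  fix \<alpha> :: "nat \<Rightarrow> nat \<Rightarrow> nat \<Rightarrow> real" and c :: "nat \<Rightarrow> nat \<Rightarrow> real"
  assume H: "(\<forall>k i j. i \<le> N \<longrightarrow> j \<le> N \<longrightarrow> i \<noteq> j \<longrightarrow> 0 < \<alpha> k i j \<and> \<alpha> k i j < 1) \<and>
       ((\<lambda>k. alpha_max N (\<alpha> k)) \<longlonglongrightarrow> 0) \<and>
       (\<forall>i j. i \<le> N \<longrightarrow> j \<le> N \<longrightarrow> i \<noteq> j \<longrightarrow>
          0 < c i j \<and> c i j \<le> 1 \<and>
          (\<lambda>k. \<bar>ln (\<alpha> k i j)\<bar> / \<bar>ln (alpha_max N (\<alpha> k))\<bar>) \<longlonglongrightarrow> c i j)"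
  have Hpos: "\<And>k i j. i \<le> N \<Longrightarrow> j \<le> N \<Longrightarrow> i \<noteq> j \<Longrightarrow> 0 < \<alpha> k i j \<and> \<alpha> k i j < 1"
    using H by blast
  have Hlim: "(\<lambda>k. alpha_max N (\<alpha> k)) \<longlonglongrightarrow> 0" using H by blast
  interpret S: sht2 M X Nb N P lam \<psi> I \<alpha>
  proof (rule sht2.intro)
    show "sht M X Nb N P lam" by (rule sht.intro) (fact X_meas P_prob P_sets llr)+
    show "sht2_axioms M N P lam \<psi> I \<alpha>"
      by (rule sht2_axioms.intro) (fact N1 psi_mono psi_bij Psi_top I_pos hyp Hpos Hlim)+
  qed
  show "(\<forall>i\<le>N. \<forall>\<epsilon>. 0 < \<epsilon> \<and> \<epsilon> < 1 \<longrightarrow> (\<forall>\<eta>>0. \<forall>\<^sub>F k in sequentially.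
          \<forall>(T, d)\<in>C_sim M X Nb N P (\<alpha> k).
            measure (P i) {\<omega>\<in>space M. real (T \<omega>) > inv_into {0<..} \<psi>
               ((1 - \<epsilon>) * Max {\<bar>ln (\<alpha> k j i)\<bar> / I i j | j. j \<le> N \<and> j \<noteq> i})}
            \<ge> 1 - \<eta>)) \<and>
       (\<forall>r::real. r \<ge> 1 \<longrightarrow> (\<forall>i\<le>N. \<forall>\<eta>>0. \<forall>\<^sub>F k in sequentially.
          \<forall>(T, d)\<in>C_sim M X Nb N P (\<alpha> k).
            (\<integral>\<^sup>+ \<omega>. ennreal (real (T \<omega>) powr r) \<partial>(P i))
            \<ge> ennreal ((1 - \<eta>) * (inv_into {0<..} \<psi>
                 (Max {\<bar>ln (\<alpha> k j i)\<bar> / I i j | j. j \<le> N \<and> j \<noteq> i})) powr r)))"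
    apply (intro conjI allI impI)
     apply (rule S.part1[unfolded S.m_def]; simp)
    apply (rule S.part2[OF _ _ _ Psi_ratio, unfolded S.m_def]; simp)
    done
qed

end
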